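(* There exist infinitely many graphs which are $1$-critical but not $0$-critical.
   Context: All graphs are finite and simple; $\mathrm{Forb}(H)$ is the family of graphs with no induced subgraph isomorphic to $H$. A family is hereditary if closed under isomorphism and induced subgraphs. $\mathcal{H}(s,t)$ is the family of graphs whose vertex set can be partitioned into $s$ stable sets and $t$ cliques. For a hereditary family $\mathcal{F}$, $\chi_c(\mathcal{F})$ is the maximum integer $l$ such that $\mathcal{H}(s,l-s)\subseteq\mathcal{F}$ for some $0\le s\le l$. Let $l=\chi_c(\mathcal{F})$. A graph $J$ is $\mathcal{F}$-reduced if there is an integer $0\le s\le l-1$ such that $\mathcal{F}$ contains every graph whose vertex set can be partitioned into $l$ parts, the first of which induces a graph isomorphic to an induced subgraph of $J$, $s$ of the remaining parts are stable sets and the other $l-1-s$ are cliques; $\mathrm{red}(\mathcal{F})$ is the family of $\mathcal{F}$-reduced graphs. A graph $G$ is an $s$-star (for an integer $s\ge0$) if there is $S\subseteq V(G)$ with $|S|\le s$ such that $G-S$ is complete or edgeless and every vertex of $S$ is adjacent either to all vertices of $V(G)\setminus S$ or to none of them (so $0$-stars are exactly complete or edgeless graphs). A hereditary family $\mathcal{F}$ is $s$-critical if there exists $n_0$ such that every $K\in\mathrm{red}(\mathcal{F})$ with $|V(K)|\ge n_0$ is an $s$-star. A graph $H$ is $s$-critical if $\mathrm{Forb}(H)$ is $s$-critical. *)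

theory Defs
  imports Main
begin

text \<open>A graph is a pair (V, E) of a finite vertex set and a set of 2-element edges.
  Graph families are sets of graphs with vertices in nat (every finite graph is
  isomorphic to one of these).\<close>

type_synonym 'a graph = "'a set \<times> 'a set set"

definition verts :: "'a graph \<Rightarrow> 'a set" where "verts G = fst G"
definition edges :: "'a graph \<Rightarrow> 'a set set" where "edges G = snd G"

definition graph :: "'a graph \<Rightarrow> bool" where
  "graph G \<longleftrightarrow> finite (verts G) \<and>
     edges G \<subseteq> {e. \<exists>u v. u \<in> verts G \<and> v \<in> verts G \<and> u \<noteq> v \<and> e = {u, v}}"

definition adj :: "'a graph \<Rightarrow> 'a \<Rightarrow> 'a \<Rightarrow> bool" where
  "adj G u v \<longleftrightarrow> {u, v} \<in> edges G"

definition induced :: "'a graph \<Rightarrow> 'a set \<Rightarrow> 'a graph" where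
  "induced G X = (X, {e \<in> edges G. e \<subseteq> X})"

definition iso :: "'a graph \<Rightarrow> 'b graph \<Rightarrow> bool" where
  "iso G H \<longleftrightarrow> (\<exists>f. bij_betw f (verts G) (verts H) \<and>
     (\<forall>u\<in>verts G. \<forall>v\<in>verts G. adj G u v \<longleftrightarrow> adj H (f u) (f v)))"

definition has_induced :: "'a graph \<Rightarrow> 'b graph \<Rightarrow> bool" where
  "has_induced G H \<longleftrightarrow> (\<exists>X \<subseteq> verts G. iso (induced G X) H)"

definition stable_in :: "'a graph \<Rightarrow> 'a set \<Rightarrow> bool" where
  "stable_in G X \<longleftrightarrow> (\<forall>u\<in>X. \<forall>v\<in>X. \<not> adj G u v)"

definition clique_in :: "'a graph \<Rightarrow> 'a set \<Rightarrow> bool" where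
  "clique_in G X \<longleftrightarrow> (\<forall>u\<in>X. \<forall>v\<in>X. u \<noteq> v \<longrightarrow> adj G u v)"

definition Forb :: "'b graph \<Rightarrow> nat graph set" where
  "Forb H = {G. graph G \<and> \<not> has_induced G H}"

text \<open>H(s,t): vertex set partitioned into s stable sets and t cliques (parts may be
  empty). Part i is {v. p v = i}; parts 0..s-1 are stable, parts s..s+t-1 cliques.\<close>
definition Hst :: "nat \<Rightarrow> nat \<Rightarrow> nat graph set" where
  "Hst s t = {G. graph G \<and> (\<exists>p :: nat \<Rightarrow> nat. (\<forall>v\<in>verts G. p v < s + t) \<and>
       (\<forall>i<s. stable_in G {v\<in>verts G. p v = i}) \<and>
       (\<forall>i. s \<le> i \<and> i < s + t \<longrightarrow> clique_in G {v\<in>verts G. p v = i}))}"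

definition chi_c :: "nat graph set \<Rightarrow> nat" where
  "chi_c F = (GREATEST l. \<exists>s\<le>l. Hst s (l - s) \<subseteq> F)"

definition reduced :: "nat graph set \<Rightarrow> nat graph \<Rightarrow> bool" where
  "reduced F J \<longleftrightarrow> (let l = chi_c F in
     \<exists>s. s + 1 \<le> l \<and>
       (\<forall>G. graph G \<longrightarrow>
          (\<forall>p :: nat \<Rightarrow> nat. (\<forall>v\<in>verts G. p v < l) \<and>
             has_induced J (induced G {v\<in>verts G. p v = 0}) \<and>
             (\<forall>i. 1 \<le> i \<and> i \<le> s \<longrightarrow> stable_in G {v\<in>verts G. p v = i}) \<and>
             (\<forall>i. s < i \<and> i < l \<longrightarrow> clique_in G {v\<in>verts G. p v = i})
           \<longrightarrow> G \<in> F)))"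

definition red :: "nat graph set \<Rightarrow> nat graph set" where
  "red F = {J. graph J \<and> reduced F J}"

definition s_star :: "nat \<Rightarrow> 'a graph \<Rightarrow> bool" where
  "s_star s G \<longleftrightarrow> (\<exists>S \<subseteq> verts G. card S \<le> s \<and>
     (clique_in G (verts G - S) \<or> stable_in G (verts G - S)) \<and>
     (\<forall>x\<in>S. (\<forall>v \<in> verts G - S. adj G x v) \<or> (\<forall>v \<in> verts G - S. \<not> adj G x v)))"

definition critical_family :: "nat \<Rightarrow> nat graph set \<Rightarrow> bool" where
  "critical_family s F \<longleftrightarrow>
     (\<exists>n0. \<forall>K\<in>red F. card (verts K) \<ge> n0 \<longrightarrow> s_star s K)"

definition critical_graph :: "nat \<Rightarrow> nat graph \<Rightarrow> bool" where
  "critical_graph s H \<longleftrightarrow> critical_family s (Forb H)"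

end

theory Submission
  imports Defs
begin


definition Hd :: "nat \<Rightarrow> nat \<Rightarrow> nat \<Rightarrow> bool" where
"Hd a u v \<longleftrightarrow> (u < a \<and> a \<le> v \<and> v < 2*a) \<or> (v < a \<and> a \<le> u \<and> u < 2*a) \<or>
   (2*a \<le> u \<and> u < 2*a+4 \<and> 2*a \<le> v \<and> v < 2*a+4 \<and> u \<noteq> v \<and> \<not>(u < 2*a+2 \<and> v < 2*a+2))"

definition HH :: "nat \<Rightarrow> nat graph" where
"HH a = ({..<2*a+4}, {{u,v} | u v. Hd a u v})"

lemma Hd_sym: "Hd a u v = Hd a v u" unfolding Hd_def by auto
lemma Hd_irrefl: "\<not> Hd a u u" by (auto simp: Hd_def)
lemma verts_HH: "verts (HH a) = {..<2*a+4}" by (simp add: HH_def verts_def)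
lemma adj_HH: "adj (HH a) u v \<longleftrightarrow> Hd a u v"
  unfolding adj_def edges_def HH_def using Hd_sym by (auto simp: doubleton_eq_iff)

lemma Hd_range: "Hd a u v \<Longrightarrow> u < 2*a+4 \<and> v < 2*a+4 \<and> u \<noteq> v"
  by (auto simp: Hd_def)

lemma graph_HH: "graph (HH a)"
proof -
  have "\<And>e. e \<in> edges (HH a) \<Longrightarrow> \<exists>u v. u \<in> verts (HH a) \<and> v \<in> verts (HH a) \<and> u \<noteq> v \<and> e = {u, v}"
  proof -
    fix e assume "e \<in> edges (HH a)"
    then obtain u v where "e = {u,v}" "Hd a u v" by (auto simp: HH_def edges_def)
    then show "\<exists>u v. u \<in> verts (HH a) \<and> v \<in> verts (HH a) \<and> u \<noteq> v \<and> e = {u, v}"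
      using Hd_range[of a u v] by (auto simp: verts_HH)
  qed
  then show ?thesis unfolding graph_def by (auto simp: verts_HH)
qed

lemma adj_sym: "adj G u v = adj G v u" by (simp add: adj_def insert_commute)
lemma graph_adj: "graph G \<Longrightarrow> adj G u v \<Longrightarrow> u \<in> verts G \<and> v \<in> verts G \<and> u \<noteq> v"
  unfolding graph_def adj_def by (auto simp: doubleton_eq_iff)
lemma verts_induced[simp]: "verts (induced G X) = X" by (simp add: induced_def verts_def)
lemma adj_induced: "adj (induced G X) u v \<longleftrightarrow> adj G u v \<and> u \<in> X \<and> v \<in> X"
  by (auto simp: adj_def induced_def edges_def)

lemma iso_intro:
  assumes "bij_betw f Z P" "\<And>x y. x\<in>Z \<Longrightarrow> y\<in>Z \<Longrightarrow> adj J x y \<longleftrightarrow> adj G (f x) (f y)"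
  shows "iso (induced J Z) (induced G P)"
  unfolding iso_def verts_induced using assms by (auto simp: adj_induced bij_betw_def)

lemma has_induced_emb:
  assumes "has_induced G H"
  obtains g where "inj_on g (verts H)" "g ` verts H \<subseteq> verts G"
    "\<And>u v. u \<in> verts H \<Longrightarrow> v \<in> verts H \<Longrightarrow> adj H u v \<longleftrightarrow> adj G (g u) (g v)"
proof -
  from assms obtain X f where X: "X \<subseteq> verts G" and b: "bij_betw f X (verts H)"
    and ad: "\<forall>u\<in>X. \<forall>v\<in>X. adj (induced G X) u v \<longleftrightarrow> adj H (f u) (f v)"
    unfolding has_induced_def iso_def verts_induced by blast
  let ?g = "inv_into X f"
  have bi: "bij_betw ?g (verts H) X" by (rule bij_betw_inv_into[OF b])
  show thesis
  proof
    show "inj_on ?g (verts H)" using bij_betw_imp_inj_on[OF bi] .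
    show "?g ` verts H \<subseteq> verts G" using bij_betw_imp_surj_on[OF bi] X by simp
    fix u v assume u: "u \<in> verts H" and v: "v \<in> verts H"
    have "?g u \<in> X" "?g v \<in> X" using bij_betwE[OF bi] u v by auto
    moreover have "f (?g u) = u" "f (?g v) = v" using b u v by (auto simp: bij_betw_def f_inv_into_f)
    ultimately show "adj H u v \<longleftrightarrow> adj G (?g u) (?g v)" using ad by (auto simp: adj_induced)
  qed
qed

lemma pigeon:
  assumes "graph G" "finite S" "S \<subseteq> verts G" "\<And>x y. x\<in>S \<Longrightarrow> y\<in>S \<Longrightarrow> x \<noteq> y \<Longrightarrow> \<not> adj G x y"
    "\<And>v. v \<in> S \<Longrightarrow> p v \<in> I" "\<And>i. i \<in> I \<Longrightarrow> clique_in G {v\<in>verts G. p v = i}"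
    "finite I" "card I < card S"
  shows False
proof -
  have "inj_on p S"
  proof (rule inj_onI)
    fix x y assume xy: "x \<in> S" "y \<in> S" "p x = p y"
    show "x = y"
    proof (rule ccontr)
      assume "x \<noteq> y"
      have "clique_in G {v\<in>verts G. p v = p x}" using assms(5,6) xy by blast
      then have "adj G x y" using xy assms(3) \<open>x \<noteq> y\<close> unfolding clique_in_def by auto
      then show False using assms(4) xy \<open>x \<noteq> y\<close> by blast
    qed
  qed
  then have "card S \<le> card I" using card_inj_on_le assms(5,7) by blast
  then show False using assms(8) by simp
qed

lemma emb_pigeon:
  assumes "graph G" "inj_on g (verts (HH a))" "g ` verts (HH a) \<subseteq> verts G"
    "\<And>u v. u \<in> verts (HH a) \<Longrightarrow> v \<in> verts (HH a) \<Longrightarrow> adj (HH a) u v \<longleftrightarrow> adj G (g u) (g v)"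
    "T \<subseteq> verts (HH a)" "\<And>x y. x \<in> T \<Longrightarrow> y \<in> T \<Longrightarrow> \<not> Hd a x y"
    "\<And>v. v \<in> T \<Longrightarrow> p (g v) \<in> I" "\<And>i. i\<in>I \<Longrightarrow> clique_in G {v\<in>verts G. p v = i}"
    "finite I" "card I < card T"
  shows False
proof -
  have fT: "finite T" using assms(5) finite_subset by (auto simp: verts_HH)
  have inj: "inj_on g T" using assms(2,5) inj_on_subset by blast
  show False
  proof (rule pigeon[OF assms(1), of "g ` T" p I])
    show "finite (g ` T)" using fT by simp
    show "g ` T \<subseteq> verts G" using assms(3,5) by blast
    show "\<And>x y. x \<in> g ` T \<Longrightarrow> y \<in> g ` T \<Longrightarrow> x \<noteq> y \<Longrightarrow> \<not> adj G x y"
    proof -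
      fix x y assume "x \<in> g ` T" "y \<in> g ` T"
      then obtain x0 y0 where "x0 \<in> T" "y0 \<in> T" "x = g x0" "y = g y0" by blast
      then show "\<not> adj G x y" using assms(4)[of x0 y0] assms(5) assms(6)[of x0 y0] by (auto simp: adj_HH)
    qed
    show "\<And>v. v \<in> g ` T \<Longrightarrow> p v \<in> I" using assms(7) by auto
    show "\<And>i. i \<in> I \<Longrightarrow> clique_in G {v \<in> verts G. p v = i}" by (rule assms(8))
    show "finite I" by (rule assms(9))
    show "card I < card (g ` T)" using assms(10) card_image[OF inj] by simp
  qed
qed



lemma Hst0_sub: "Hst 0 (a+1) \<subseteq> Forb (HH a)"
proof
  fix G assume "G \<in> Hst 0 (a+1)"
  then obtain p where G: "graph G" and pl: "\<forall>v\<in>verts G. p v < a+1"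
    and cl: "\<forall>i. i < a+1 \<longrightarrow> clique_in G {v\<in>verts G. p v = i}"
    unfolding Hst_def by auto
  have "\<not> has_induced G (HH a)"
  proof
    assume "has_induced G (HH a)"
    then obtain g where g1: "inj_on g (verts (HH a))" and g2: "g ` verts (HH a) \<subseteq> verts G"
      and g3: "\<And>u v. u \<in> verts (HH a) \<Longrightarrow> v \<in> verts (HH a) \<Longrightarrow> adj (HH a) u v \<longleftrightarrow> adj G (g u) (g v)"
      by (rule has_induced_emb) blast
    let ?T = "{..<a} \<union> {2*a, 2*a+1}"
    have cT: "card ?T = a+2" by (subst card_Un_disjoint) auto
    show False
    proof (rule emb_pigeon[OF G g1 g2 g3, of ?T p "{..<a+1}"])
      show "?T \<subseteq> verts (HH a)" by (auto simp: verts_HH)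
      show "\<And>x y. x \<in> ?T \<Longrightarrow> y \<in> ?T \<Longrightarrow> \<not> Hd a x y" by (auto simp: Hd_def)
      show "\<And>v. v \<in> ?T \<Longrightarrow> p (g v) \<in> {..<a+1}"
      proof -
        fix v assume "v \<in> ?T"
        then have "g v \<in> verts G" using g2 by (auto simp: verts_HH)
        then show "p (g v) \<in> {..<a+1}" using pl by auto
      qed
      show "\<And>i. i \<in> {..<a+1} \<Longrightarrow> clique_in G {v\<in>verts G. p v = i}" using cl by auto
      show "finite {..<a+1}" by simp
      show "card {..<a+1} < card ?T" using cT by simp
    qed
  qed
  then show "G \<in> Forb (HH a)" unfolding Forb_def using G by simp
qed

lemma HH_self: "HH a \<notin> Forb (HH a)"
proof -
  have "iso (induced (HH a) (verts (HH a))) (HH a)"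
    unfolding iso_def verts_induced
    by (rule exI[of _ id]) (auto simp: adj_induced)
  then have "has_induced (HH a) (HH a)" unfolding has_induced_def by blast
  then show ?thesis unfolding Forb_def by simp
qed

lemma Hst_s0: "a+2 \<le> t \<Longrightarrow> HH a \<in> Hst 0 t"
  unfolding Hst_def
  apply (simp add: graph_HH)
  apply (rule exI[of _ "\<lambda>v. if v < a then v else if v < 2*a then v - a else if v = 2*a+1 then a+1 else a"])
  apply (auto simp: verts_HH clique_in_def adj_HH Hd_def split: if_splits)
  done

lemma Hst_s1: "a+1 \<le> t \<Longrightarrow> HH a \<in> Hst 1 t"
  unfolding Hst_def
  apply (simp add: graph_HH)
  apply (rule exI[of _ "\<lambda>v. if v < a \<or> v = 2*a \<or> v = 2*a+1 then 0 else if v < 2*a then v - a + 1 else a+1"])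
  apply (auto simp: verts_HH clique_in_def stable_in_def adj_HH Hd_def split: if_splits)
  done

lemma Hst_s2: "2 \<le> s \<Longrightarrow> 3 \<le> s + t \<Longrightarrow> HH a \<in> Hst s t"
  unfolding Hst_def
  apply (simp add: graph_HH)
  apply (rule exI[of _ "\<lambda>v. if v < a \<or> v = 2*a \<or> v = 2*a+1 then 0 else if v < 2*a \<or> v = 2*a+2 then 1 else 2"])
  apply (auto simp: verts_HH clique_in_def stable_in_def adj_HH Hd_def split: if_splits)
  done


lemma HH_in_Hst: "1 \<le> a \<Longrightarrow> a+2 \<le> s+t \<Longrightarrow> HH a \<in> Hst s t"
proof -
  assume a: "1 \<le> a" and st: "a+2 \<le> s+t"
  consider "s = 0" | "s = 1" | "2 \<le> s" by arith
  then show ?thesis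
  proof cases
    case 1 then show ?thesis using Hst_s0[of a t] st by simp
  next
    case 2 then show ?thesis using Hst_s1[of a t] st by simp
  next
    case 3 then show ?thesis using Hst_s2[of s t a] st a by simp
  qed
qed

lemma chi_HH: "1 \<le> a \<Longrightarrow> chi_c (Forb (HH a)) = a+1"
  unfolding chi_c_def
proof (rule Greatest_equality)
  show "\<exists>s\<le>a+1. Hst s (a+1-s) \<subseteq> Forb (HH a)" using Hst0_sub[of a] by (intro exI[of _ 0]) simp
next
  fix y assume a: "1 \<le> a" and "\<exists>s\<le>y. Hst s (y-s) \<subseteq> Forb (HH a)"
  then obtain s where s: "s \<le> y" "Hst s (y-s) \<subseteq> Forb (HH a)" by blast
  show "y \<le> a+1"
  proof (rule ccontr)
    assume "\<not> y \<le> a+1"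
    then have "HH a \<in> Hst s (y-s)" using HH_in_Hst[OF a, of s "y-s"] s(1) by simp
    then show False using s(2) HH_self by blast
  qed
qed

lemma red_use:
  assumes a: "1 \<le> a" and r: "reduced (Forb (HH a)) J"
  obtains s where "s \<le> a"
    "\<And>p. (\<forall>v\<in>verts (HH a). p v < a+1) \<Longrightarrow>
       has_induced J (induced (HH a) {v\<in>verts (HH a). p v = 0}) \<Longrightarrow>
       (\<forall>i. 1 \<le> i \<and> i \<le> s \<longrightarrow> stable_in (HH a) {v\<in>verts (HH a). p v = i}) \<Longrightarrow>
       (\<forall>i. s < i \<and> i < a+1 \<longrightarrow> clique_in (HH a) {v\<in>verts (HH a). p v = i}) \<Longrightarrow> False"
proof -
  from r obtain s where s: "s+1 \<le> a+1" and H: "\<forall>G. graph G \<longrightarrow>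
          (\<forall>p :: nat \<Rightarrow> nat. (\<forall>v\<in>verts G. p v < a+1) \<and>
             has_induced J (induced G {v\<in>verts G. p v = 0}) \<and>
             (\<forall>i. 1 \<le> i \<and> i \<le> s \<longrightarrow> stable_in G {v\<in>verts G. p v = i}) \<and>
             (\<forall>i. s < i \<and> i < a+1 \<longrightarrow> clique_in G {v\<in>verts G. p v = i})
           \<longrightarrow> G \<in> Forb (HH a))"
    using r unfolding reduced_def by (simp only: Let_def chi_HH[OF a]) (elim exE conjE, blast)
  show thesis
  proof (rule that[of s])
    show "s \<le> a" using s by simp
    fix p assume prems: "\<forall>v\<in>verts (HH a). p v < a+1" "has_induced J (induced (HH a) {v\<in>verts (HH a). p v = 0})"
       "\<forall>i. 1 \<le> i \<and> i \<le> s \<longrightarrow> stable_in (HH a) {v\<in>verts (HH a). p v = i}"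
       "\<forall>i. s < i \<and> i < a+1 \<longrightarrow> clique_in (HH a) {v\<in>verts (HH a). p v = i}"
    have "HH a \<in> Forb (HH a)" apply (rule H[rule_format, OF graph_HH[of a], of p]) using prems by blast
    then show False using HH_self by blast
  qed
qed

lemma has_induced_intro:
  assumes "Z \<subseteq> verts J" "bij_betw f Z P" "\<And>x y. x\<in>Z \<Longrightarrow> y\<in>Z \<Longrightarrow> adj J x y \<longleftrightarrow> adj G (f x) (f y)"
  shows "has_induced J (induced G P)"
  unfolding has_induced_def
  by (rule exI[of _ Z], rule conjI, rule assms(1), rule iso_intro[OF assms(2,3)])

lemma noloop: "graph G \<Longrightarrow> \<not> adj G x x" using graph_adj[of G x x] by blast

lemma has_induced4f:
  assumes "graph J" "graph G" "{b,c,v,w} \<subseteq> verts J" "distinct [b,c,v,w]" "distinct [B,C,V,W]"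
    "f b = B" "f c = C" "f v = V" "f w = W"
    "adj J b c = adj G B C" "adj J b v = adj G B V" "adj J b w = adj G B W"
    "adj J c v = adj G C V" "adj J c w = adj G C W" "adj J v w = adj G V W"
  shows "has_induced J (induced G {B,C,V,W})"
proof (rule has_induced_intro[of "{b,c,v,w}" J f])
  show "{b,c,v,w} \<subseteq> verts J" by fact
  show "bij_betw f {b,c,v,w} {B,C,V,W}"
    using assms(4-9) by (simp add: bij_betw_def inj_on_insert)
  have s: "adj J c b = adj G C B" "adj J v b = adj G V B" "adj J v c = adj G V C"
     "adj J w b = adj G W B" "adj J w c = adj G W C" "adj J w v = adj G W V"
    using assms(10-15) adj_sym[of J b c] adj_sym[of G B C]
      adj_sym[of J b v] adj_sym[of G B V] adj_sym[of J c v] adj_sym[of G C V]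
      adj_sym[of J b w] adj_sym[of G B W] adj_sym[of J c w] adj_sym[of G C W]
      adj_sym[of J v w] adj_sym[of G V W] by auto
  fix x y assume x: "x \<in> {b,c,v,w}" and y: "y \<in> {b,c,v,w}"
  have l: "\<And>z. \<not> adj J z z" "\<And>z. \<not> adj G z z" using noloop[OF assms(1)] noloop[OF assms(2)] by auto
  from x have "x = b \<or> x = c \<or> x = v \<or> x = w" by simp
  moreover from y have "y = b \<or> y = c \<or> y = v \<or> y = w" by simp
  ultimately show "adj J x y = adj G (f x) (f y)"
    by (elim disjE) (simp_all add: s assms(6-15) l)
qed

lemma has_induced3f:
  assumes "graph J" "graph G" "{b,c,v} \<subseteq> verts J" "distinct [b,c,v]" "distinct [B,C,V]"
    "f b = B" "f c = C" "f v = V"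
    "adj J b c = adj G B C" "adj J b v = adj G B V" "adj J c v = adj G C V"
  shows "has_induced J (induced G {B,C,V})"
proof (rule has_induced_intro[of "{b,c,v}" J f])
  show "{b,c,v} \<subseteq> verts J" by fact
  show "bij_betw f {b,c,v} {B,C,V}"
    using assms(4-8) by (simp add: bij_betw_def inj_on_insert)
  have s: "adj J c b = adj G C B" "adj J v b = adj G V B" "adj J v c = adj G V C"
    using assms(9-11) adj_sym[of J b c] adj_sym[of G B C]
      adj_sym[of J b v] adj_sym[of G B V] adj_sym[of J c v] adj_sym[of G C V] by auto
  fix x y assume x: "x \<in> {b,c,v}" and y: "y \<in> {b,c,v}"
  have l: "\<And>z. \<not> adj J z z" "\<And>z. \<not> adj G z z" using noloop[OF assms(1)] noloop[OF assms(2)] by auto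
  from x have "x = b \<or> x = c \<or> x = v" by simp
  moreover from y have "y = b \<or> y = c \<or> y = v" by simp
  ultimately show "adj J x y = adj G (f x) (f y)"
    by (elim disjE) (simp_all add: s assms(6-11) l)
qed

lemma has_induced2f:
  assumes "graph J" "graph G" "{b,c} \<subseteq> verts J" "b \<noteq> c" "B \<noteq> C"
    "f b = B" "f c = C" "adj J b c = adj G B C"
  shows "has_induced J (induced G {B,C})"
proof (rule has_induced_intro[of "{b,c}" J f])
  show "{b,c} \<subseteq> verts J" by fact
  show "bij_betw f {b,c} {B,C}"
    using assms(4-7) by (simp add: bij_betw_def inj_on_insert)
  have s: "adj J c b = adj G C B"
    using assms(8) adj_sym[of J b c] adj_sym[of G B C] by auto
  fix x y assume x: "x \<in> {b,c}" and y: "y \<in> {b,c}"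
  have l: "\<And>z. \<not> adj J z z" "\<And>z. \<not> adj G z z" using noloop[OF assms(1)] noloop[OF assms(2)] by auto
  from x have "x = b \<or> x = c" by simp
  moreover from y have "y = b \<or> y = c" by simp
  ultimately show "adj J x y = adj G (f x) (f y)"
    by (elim disjE) (simp_all add: s assms(6-8) l)
qed

lemma one_star:
  assumes g: "graph J"
   and P3: "\<And>x y z. x \<in> verts J \<Longrightarrow> y \<in> verts J \<Longrightarrow> z \<in> verts J \<Longrightarrow> adj J x y \<Longrightarrow> z \<noteq> x \<Longrightarrow> z \<noteq> y
        \<Longrightarrow> \<not> adj J x z \<Longrightarrow> \<not> adj J y z \<Longrightarrow> False"
   and C4: "\<And>b c v w. b \<in> verts J \<Longrightarrow> c \<in> verts J \<Longrightarrow> v \<in> verts J \<Longrightarrow> w \<in> verts J \<Longrightarrow>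
        b \<noteq> c \<Longrightarrow> v \<noteq> w \<Longrightarrow> \<not>adj J b c \<Longrightarrow> \<not>adj J v w \<Longrightarrow>
        adj J b v \<Longrightarrow> adj J b w \<Longrightarrow> adj J c v \<Longrightarrow> adj J c w \<Longrightarrow> False"
   and D: "\<And>b c v w. b \<in> verts J \<Longrightarrow> c \<in> verts J \<Longrightarrow> v \<in> verts J \<Longrightarrow> w \<in> verts J \<Longrightarrow>
        b \<noteq> c \<Longrightarrow> \<not>adj J b c \<Longrightarrow> adj J v w \<Longrightarrow>
        adj J b v \<Longrightarrow> adj J b w \<Longrightarrow> adj J c v \<Longrightarrow> adj J c w \<Longrightarrow> False"
  shows "s_star 1 J"
proof -
  let ?V = "verts J"
  have fin: "finite ?V" using g unfolding graph_def by blast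
  have loop: "\<And>x. \<not> adj J x x" using noloop[OF g] .
  show ?thesis
  proof (cases "clique_in J ?V")
    case True
    then show ?thesis unfolding s_star_def by (intro exI[of _ "{}"]) auto
  next
    case False
    then obtain b c where bc: "b \<in> ?V" "c \<in> ?V" "b \<noteq> c" "\<not> adj J b c" unfolding clique_in_def by auto
    define P where "P = {x\<in>?V. x = b \<or> \<not> adj J x b}"
    define Q where "Q = ?V - P"
    have T: "\<And>x y z. x\<in>?V \<Longrightarrow> y\<in>?V \<Longrightarrow> z\<in>?V \<Longrightarrow> \<not>adj J x y \<Longrightarrow> \<not>adj J y z \<Longrightarrow> x\<noteq>y \<Longrightarrow> y\<noteq>z \<Longrightarrow> x \<noteq> z \<Longrightarrow> \<not>adj J x z"
    proof
      fix x y z assume h: "x\<in>?V" "y\<in>?V" "z\<in>?V" "\<not>adj J x y" "\<not>adj J y z" "x\<noteq>y" "y\<noteq>z" "x \<noteq> z" "adj J x z"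
      show False using P3[of x z y] h adj_sym[of J z y] by auto
    qed
    have Pst: "stable_in J P" unfolding stable_in_def
    proof (intro ballI)
      fix x y assume x: "x \<in> P" and y: "y \<in> P"
      show "\<not> adj J x y"
      proof (cases "x = y")
        case True then show ?thesis using loop by simp
      next
        case xy: False
        show ?thesis
        proof (cases "x = b")
          case True then show ?thesis using y xy adj_sym[of J b y] by (auto simp: P_def)
        next
          case xb: False
          show ?thesis
          proof (cases "y = b")
            case True then show ?thesis using x xb by (auto simp: P_def)
          next
            case False
            then show ?thesis using T[of x b y] x y xb xy adj_sym[of J b y] bc(1) by (auto simp: P_def)
          qed
        qed
      qed
    qed
    have Qadj: "\<And>v z. v \<in> Q \<Longrightarrow> z \<in> P \<Longrightarrow> adj J v z"
    proof -
      fix v z assume v: "v \<in> Q" and z: "z \<in> P"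
      have v1: "v \<in> ?V" "v \<noteq> b" "adj J v b" using v by (auto simp: Q_def P_def)
      show "adj J v z"
      proof (cases "z = b")
        case True then show ?thesis using v1 by simp
      next
        case False
        then have z1: "z \<in> ?V" "\<not> adj J z b" using z by (auto simp: P_def)
        have "v \<noteq> z" using v z by (auto simp: Q_def)
        show ?thesis
        proof (rule ccontr)
          assume "\<not> adj J v z"
          then have "\<not> adj J v b" using T[of v z b] v1 z1 False \<open>v \<noteq> z\<close> bc(1) by blast
          then show False using v1 by simp
        qed
      qed
    qed
    have cP: "c \<in> P" "b \<in> P" using bc adj_sym[of J c b] by (auto simp: P_def)
    have Qone: "\<And>v w. v \<in> Q \<Longrightarrow> w \<in> Q \<Longrightarrow> v = w"
    proof (rule ccontr)
      fix v w assume v: "v \<in> Q" and w: "w \<in> Q" and vw: "v \<noteq> w"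
      have a1: "adj J b v" "adj J b w" "adj J c v" "adj J c w"
        using Qadj[OF v cP(1)] Qadj[OF v cP(2)] Qadj[OF w cP(1)] Qadj[OF w cP(2)]
          adj_sym[of J b v] adj_sym[of J b w] adj_sym[of J c v] adj_sym[of J c w] by auto
      have vV: "v \<in> ?V" "w \<in> ?V" using v w by (auto simp: Q_def)
      show False
      proof (cases "adj J v w")
        case True then show False using D[of b c v w] bc vV a1 by blast
      next
        case False then show False using C4[of b c v w] bc vV a1 vw by blast
      qed
    qed
    have finQ: "finite Q" using fin by (simp add: Q_def)
    have cQ: "card Q \<le> 1" using Qone card_le_Suc0_iff_eq[OF finQ] by auto
    have VQ: "?V - Q = P" by (auto simp: Q_def P_def)
    show ?thesis unfolding s_star_def
    proof (intro exI[of _ Q] conjI)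
      show "Q \<subseteq> ?V" by (auto simp: Q_def)
      show "card Q \<le> 1" by fact
      show "clique_in J (?V - Q) \<or> stable_in J (?V - Q)" using Pst VQ by simp
      show "\<forall>x\<in>Q. (\<forall>v\<in>?V - Q. adj J x v) \<or> (\<forall>v\<in>?V - Q. \<not> adj J x v)" using Qadj VQ by auto
    qed
  qed
qed

lemma red_1star:
  assumes a: "3 \<le> a" and J: "J \<in> red (Forb (HH a))"
  shows "s_star 1 J"
proof -
  have gJ: "graph J" and r: "reduced (Forb (HH a)) J" using J by (auto simp: red_def)
  have a1: "1 \<le> a" using a by simp
  obtain s where sa: "s \<le> a" and F:
    "\<And>p. (\<forall>v\<in>verts (HH a). p v < a+1) \<Longrightarrow>
       has_induced J (induced (HH a) {v\<in>verts (HH a). p v = 0}) \<Longrightarrow>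
       (\<forall>i. 1 \<le> i \<and> i \<le> s \<longrightarrow> stable_in (HH a) {v\<in>verts (HH a). p v = i}) \<Longrightarrow>
       (\<forall>i. s < i \<and> i < a+1 \<longrightarrow> clique_in (HH a) {v\<in>verts (HH a). p v = i}) \<Longrightarrow> False"
    by (rule red_use[OF a1 r]) blast
  consider "s = 0" | "s = 1" | "2 \<le> s" by arith
  then show ?thesis
  proof cases
    case 3
    define p where "p = (\<lambda>v::nat. if v < a \<or> v = 2*a \<or> v = 2*a+1 then 1 else if v < 2*a \<or> v = 2*a+2 then 2 else (3::nat))"
    have P0: "{v\<in>verts (HH a). p v = 0} = {}" by (auto simp: p_def)
    have hi: "has_induced J (induced (HH a) {v\<in>verts (HH a). p v = 0})"
      unfolding P0 by (rule has_induced_intro[of "{}" J id]) auto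
    have c1: "\<forall>v\<in>verts (HH a). p v < a+1" using a by (auto simp: p_def)
    have c2: "\<forall>i. 1 \<le> i \<and> i \<le> s \<longrightarrow> stable_in (HH a) {v\<in>verts (HH a). p v = i}"
      by (auto simp: p_def stable_in_def adj_HH Hd_def verts_HH split: if_splits)
    have c3: "\<forall>i. s < i \<and> i < a+1 \<longrightarrow> clique_in (HH a) {v\<in>verts (HH a). p v = i}"
      using 3 by (auto simp: p_def clique_in_def adj_HH Hd_def verts_HH split: if_splits)
    show ?thesis using F[OF c1 hi c2 c3] ..
  next
    case 2
    have "clique_in J (verts J)"
    proof (rule ccontr)
      assume "\<not> clique_in J (verts J)"
      then obtain j1 j2 where j: "j1 \<in> verts J" "j2 \<in> verts J" "j1 \<noteq> j2" "\<not> adj J j1 j2"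
        unfolding clique_in_def by auto
      define p where "p = (\<lambda>v::nat. if v < 2 then 0 else if v < a then v else if v < 2*a+2 then 1 else a)"
      have P0: "{v\<in>verts (HH a). p v = 0} = {0,1}" using a by (auto simp: p_def verts_HH)
      have hi0: "has_induced J (induced (HH a) {0,1})"
        by (rule has_induced2f[OF gJ graph_HH, of j1 j2 0 1 "\<lambda>x. if x = j1 then 0 else 1"])
          (use j a in \<open>auto simp: adj_HH Hd_def\<close>)
      have hi: "has_induced J (induced (HH a) {v\<in>verts (HH a). p v = 0})"
        unfolding P0 by (rule hi0)
      have c1: "\<forall>v\<in>verts (HH a). p v < a+1" using a by (auto simp: p_def)
      have c2: "\<forall>i. 1 \<le> i \<and> i \<le> s \<longrightarrow> stable_in (HH a) {v\<in>verts (HH a). p v = i}"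
        using 2 a by (auto simp: p_def stable_in_def adj_HH Hd_def verts_HH split: if_splits)
      have c3: "\<forall>i. s < i \<and> i < a+1 \<longrightarrow> clique_in (HH a) {v\<in>verts (HH a). p v = i}"
        using 2 a by (auto simp: p_def clique_in_def adj_HH Hd_def verts_HH split: if_splits)
      show False using F[OF c1 hi c2 c3] .
    qed
    then show ?thesis unfolding s_star_def by (intro exI[of _ "{}"]) auto
  next
    case 1
    show ?thesis
    proof (rule one_star[OF gJ])
      fix x y z assume h: "x \<in> verts J" "y \<in> verts J" "z \<in> verts J" "adj J x y" "z \<noteq> x" "z \<noteq> y"
        "\<not> adj J x z" "\<not> adj J y z"
      have xy: "x \<noteq> y" using graph_adj[OF gJ h(4)] by simp
      define p where "p = (\<lambda>v::nat. if v = 0 \<or> v = a \<or> v = 2*a then 0 else if v < a then v else if v < 2*a then v - a else a)"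
      have P0: "{v\<in>verts (HH a). p v = 0} = {0,a,2*a}" using a by (auto simp: p_def verts_HH)
      have hi0: "has_induced J (induced (HH a) {0,a,2*a})"
        by (rule has_induced3f[OF gJ graph_HH, of x y z 0 a "2*a" "\<lambda>t. if t = x then 0 else if t = y then a else 2*a"])
          (use h xy a in \<open>auto simp: adj_HH Hd_def\<close>)
      have hi: "has_induced J (induced (HH a) {v\<in>verts (HH a). p v = 0})"
        unfolding P0 by (rule hi0)
      have c1: "\<forall>v\<in>verts (HH a). p v < a+1" using a by (auto simp: p_def)
      have c2: "\<forall>i. 1 \<le> i \<and> i \<le> s \<longrightarrow> stable_in (HH a) {v\<in>verts (HH a). p v = i}"
        using 1 by auto
      have c3: "\<forall>i. s < i \<and> i < a+1 \<longrightarrow> clique_in (HH a) {v\<in>verts (HH a). p v = i}"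
        using 1 a by (auto simp: p_def clique_in_def adj_HH Hd_def verts_HH split: if_splits)
      show False using F[OF c1 hi c2 c3] .
    next
      fix b c v w assume h: "b \<in> verts J" "c \<in> verts J" "v \<in> verts J" "w \<in> verts J"
        "b \<noteq> c" "v \<noteq> w" "\<not>adj J b c" "\<not>adj J v w"
        "adj J b v" "adj J b w" "adj J c v" "adj J c w"
      have d: "b \<noteq> v" "b \<noteq> w" "c \<noteq> v" "c \<noteq> w"
        using graph_adj[OF gJ h(9)] graph_adj[OF gJ h(10)] graph_adj[OF gJ h(11)] graph_adj[OF gJ h(12)] by auto
      define p where "p = (\<lambda>t::nat. if t = 0 \<or> t = 1 \<or> t = a \<or> t = a+1 then 0 else if t < a then t - 1
          else if t < 2*a then t - a - 1 else if t = 2*a+1 then a else a - 1)"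
      have P0: "{t\<in>verts (HH a). p t = 0} = {0,1,a,a+1}" using a by (auto simp: p_def verts_HH)
      have hi0: "has_induced J (induced (HH a) {0,1,a,a+1})"
        by (rule has_induced4f[OF gJ graph_HH, of b c v w 0 1 a "a+1"
              "\<lambda>t. if t = b then 0 else if t = c then 1 else if t = v then a else a+1"])
          (use h d a in \<open>auto simp: adj_HH Hd_def\<close>)
      have hi: "has_induced J (induced (HH a) {t\<in>verts (HH a). p t = 0})"
        unfolding P0 by (rule hi0)
      have c1: "\<forall>t\<in>verts (HH a). p t < a+1" using a by (auto simp: p_def)
      have c2: "\<forall>i. 1 \<le> i \<and> i \<le> s \<longrightarrow> stable_in (HH a) {t\<in>verts (HH a). p t = i}"
        using 1 by auto
      have c3: "\<forall>i. s < i \<and> i < a+1 \<longrightarrow> clique_in (HH a) {t\<in>verts (HH a). p t = i}"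
        using 1 a by (auto simp: p_def clique_in_def adj_HH Hd_def verts_HH split: if_splits)
      show False using F[OF c1 hi c2 c3] .
    next
      fix b c v w assume h: "b \<in> verts J" "c \<in> verts J" "v \<in> verts J" "w \<in> verts J"
        "b \<noteq> c" "\<not>adj J b c" "adj J v w"
        "adj J b v" "adj J b w" "adj J c v" "adj J c w"
      have d: "b \<noteq> v" "b \<noteq> w" "c \<noteq> v" "c \<noteq> w" "v \<noteq> w"
        using graph_adj[OF gJ h(7)] graph_adj[OF gJ h(8)] graph_adj[OF gJ h(9)] graph_adj[OF gJ h(10)]
          graph_adj[OF gJ h(11)] by auto
      define p where "p = (\<lambda>t::nat. if 2*a \<le> t then 0 else if t < a then t + 1 else t - a + 1)"
      have P0: "{t\<in>verts (HH a). p t = 0} = {2*a,2*a+1,2*a+2,2*a+3}" using a by (auto simp: p_def verts_HH)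
      have hi0: "has_induced J (induced (HH a) {2*a,2*a+1,2*a+2,2*a+3})"
        by (rule has_induced4f[OF gJ graph_HH, of b c v w "2*a" "2*a+1" "2*a+2" "2*a+3"
              "\<lambda>t. if t = b then 2*a else if t = c then 2*a+1 else if t = v then 2*a+2 else 2*a+3"])
          (use h d a in \<open>auto simp: adj_HH Hd_def\<close>)
      have hi: "has_induced J (induced (HH a) {t\<in>verts (HH a). p t = 0})"
        unfolding P0 by (rule hi0)
      have c1: "\<forall>t\<in>verts (HH a). p t < a+1" using a by (auto simp: p_def)
      have c2: "\<forall>i. 1 \<le> i \<and> i \<le> s \<longrightarrow> stable_in (HH a) {t\<in>verts (HH a). p t = i}"
        using 1 by auto
      have c3: "\<forall>i. s < i \<and> i < a+1 \<longrightarrow> clique_in (HH a) {t\<in>verts (HH a). p t = i}"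
        using 1 a by (auto simp: p_def clique_in_def adj_HH Hd_def verts_HH split: if_splits)
      show False using F[OF c1 hi c2 c3] .
    qed
  qed
qed

definition SG :: "nat \<Rightarrow> nat graph" where
"SG m = ({..m}, {{0, i} | i. 1 \<le> i \<and> i \<le> m})"

lemma verts_SG: "verts (SG m) = {..m}" by (simp add: SG_def verts_def)
lemma adj_SG: "adj (SG m) u v \<longleftrightarrow> (u = 0 \<and> 1 \<le> v \<and> v \<le> m) \<or> (v = 0 \<and> 1 \<le> u \<and> u \<le> m)"
  unfolding adj_def edges_def SG_def by (auto simp: doubleton_eq_iff)
lemma graph_SG: "graph (SG m)"
proof -
  have "\<And>e. e \<in> edges (SG m) \<Longrightarrow> \<exists>u v. u \<in> verts (SG m) \<and> v \<in> verts (SG m) \<and> u \<noteq> v \<and> e = {u, v}"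
  proof -
    fix e assume "e \<in> edges (SG m)"
    then obtain i where "e = {0,i}" "1 \<le> i" "i \<le> m" by (auto simp: SG_def edges_def)
    then show "\<exists>u v. u \<in> verts (SG m) \<and> v \<in> verts (SG m) \<and> u \<noteq> v \<and> e = {u, v}"
      by (intro exI[of _ 0] exI[of _ i]) (auto simp: verts_SG)
  qed
  then show ?thesis unfolding graph_def by (auto simp: verts_SG)
qed

lemma SG_not0: "2 \<le> m \<Longrightarrow> \<not> s_star 0 (SG m)"
proof
  assume m: "2 \<le> m" and "s_star 0 (SG m)"
  then obtain S where S: "S \<subseteq> {..m}" "card S \<le> 0"
    "clique_in (SG m) ({..m} - S) \<or> stable_in (SG m) ({..m} - S)"
    unfolding s_star_def verts_SG by blast
  have "finite S" using S(1) finite_subset by blast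
  then have "S = {}" using S(2) by simp
  then consider "clique_in (SG m) {..m}" | "stable_in (SG m) {..m}" using S(3) by auto
  then show False
  proof cases
    case 1
    then have "adj (SG m) 1 2" using m unfolding clique_in_def by auto
    then show False by (simp add: adj_SG)
  next
    case 2
    then have "\<not> adj (SG m) 0 1" using m unfolding stable_in_def by auto
    then show False using m by (simp add: adj_SG)
  qed
qed

definition StarP :: "'a graph \<Rightarrow> 'a set \<Rightarrow> bool" where
"StarP G A \<longleftrightarrow> (\<forall>x\<in>A. \<forall>y\<in>A. \<not> adj G x y) \<or>
   (\<exists>c\<in>A. (\<forall>x\<in>A. \<forall>y\<in>A. adj G x y \<longrightarrow> x = c \<or> y = c) \<and> (\<forall>y\<in>A. y \<noteq> c \<longrightarrow> adj G c y))"

lemma StarP_from_SG: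
  assumes "has_induced (SG m) (induced G P)"
  shows "StarP G P"
proof -
  from assms obtain Z f where Z: "Z \<subseteq> {..m}" and b: "bij_betw f Z P"
    and ad: "\<forall>u\<in>Z. \<forall>v\<in>Z. adj (induced (SG m) Z) u v \<longleftrightarrow> adj (induced G P) (f u) (f v)"
    unfolding has_induced_def iso_def verts_induced verts_SG by blast
  have fP: "\<And>u. u \<in> Z \<Longrightarrow> f u \<in> P" using b bij_betwE by blast
  have ad2: "\<And>u v. u \<in> Z \<Longrightarrow> v \<in> Z \<Longrightarrow> adj (SG m) u v \<longleftrightarrow> adj G (f u) (f v)"
    using ad fP by (auto simp: adj_induced)
  have surj: "\<And>x. x \<in> P \<Longrightarrow> \<exists>u\<in>Z. x = f u" using bij_betw_imp_surj_on[OF b] by blast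
  have inj: "inj_on f Z" using bij_betw_imp_inj_on[OF b] .
  show ?thesis
  proof (cases "0 \<in> Z")
    case True
    show ?thesis unfolding StarP_def
    proof (rule disjI2, rule bexI[of _ "f 0"], rule conjI)
      show "f 0 \<in> P" using fP True .
      show "\<forall>x\<in>P. \<forall>y\<in>P. adj G x y \<longrightarrow> x = f 0 \<or> y = f 0"
      proof (intro ballI impI)
        fix x y assume "x \<in> P" "y \<in> P" "adj G x y"
        then obtain u v where "u \<in> Z" "v \<in> Z" "x = f u" "y = f v" "adj G (f u) (f v)" using surj by blast
        then have "adj (SG m) u v" using ad2 by blast
        then have "u = 0 \<or> v = 0" by (auto simp: adj_SG)
        then show "x = f 0 \<or> y = f 0" using \<open>x = f u\<close> \<open>y = f v\<close> by auto
      qed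
      show "\<forall>y\<in>P. y \<noteq> f 0 \<longrightarrow> adj G (f 0) y"
      proof (intro ballI impI)
        fix y assume "y \<in> P" "y \<noteq> f 0"
        then obtain v where v: "v \<in> Z" "y = f v" using surj by blast
        have "v \<noteq> 0"
        proof
          assume "v = 0" then show False using v \<open>y \<noteq> f 0\<close> by simp
        qed
        then have "adj (SG m) 0 v" using v Z by (auto simp: adj_SG)
        then show "adj G (f 0) y" using ad2[OF True v(1)] v by simp
      qed
    qed
  next
    case False
    show ?thesis unfolding StarP_def
    proof (rule disjI1, intro ballI)
      fix x y assume "x \<in> P" "y \<in> P"
      then obtain u v where uv: "u \<in> Z" "v \<in> Z" "x = f u" "y = f v" using surj by blast
      then have "\<not> adj (SG m) u v" using False by (auto simp: adj_SG)
      then show "\<not> adj G x y" using ad2[OF uv(1,2)] uv by simp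
    qed
  qed
qed

lemma StarP_pull:
  assumes st: "StarP G P" and inj: "inj_on g V"
    and ad: "\<And>u v. u\<in>V \<Longrightarrow> v\<in>V \<Longrightarrow> adj H u v \<longleftrightarrow> adj G (g u) (g v)"
    and AV: "A \<subseteq> V" and gA: "g ` A \<subseteq> P"
  shows "StarP H A"
proof -
  have ad': "\<And>u v. u\<in>A \<Longrightarrow> v\<in>A \<Longrightarrow> adj H u v \<longleftrightarrow> adj G (g u) (g v)" using ad AV by blast
  have injA: "\<And>u v. u\<in>A \<Longrightarrow> v\<in>A \<Longrightarrow> g u = g v \<Longrightarrow> u = v" using inj AV unfolding inj_on_def by blast
  from st[unfolded StarP_def] show ?thesis
  proof (elim disjE bexE conjE)
    assume h: "\<forall>x\<in>P. \<forall>y\<in>P. \<not> adj G x y"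
    have "\<forall>x\<in>A. \<forall>y\<in>A. \<not> adj H x y" using h ad' gA by blast
    then show ?thesis unfolding StarP_def by blast
  next
    fix c assume c: "c \<in> P" and h1: "\<forall>x\<in>P. \<forall>y\<in>P. adj G x y \<longrightarrow> x = c \<or> y = c"
      and h2: "\<forall>y\<in>P. y \<noteq> c \<longrightarrow> adj G c y"
    show ?thesis
    proof (cases "c \<in> g ` A")
      case True
      then obtain c0 where c0: "c0 \<in> A" "c = g c0" by blast
      have "(\<forall>x\<in>A. \<forall>y\<in>A. adj H x y \<longrightarrow> x = c0 \<or> y = c0)"
      proof (intro ballI impI)
        fix x y assume xy: "x \<in> A" "y \<in> A" "adj H x y"
        then have "g x = c \<or> g y = c" using h1 ad' gA by blast
        then show "x = c0 \<or> y = c0" using injA xy c0 by blast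
      qed
      moreover have "\<forall>y\<in>A. y \<noteq> c0 \<longrightarrow> adj H c0 y"
      proof (intro ballI impI)
        fix y assume y: "y \<in> A" "y \<noteq> c0"
        then have "g y \<noteq> c" using injA c0 by blast
        then have "adj G c (g y)" using h2 gA y by blast
        then show "adj H c0 y" using ad' c0 y by blast
      qed
      ultimately show ?thesis using c0 unfolding StarP_def by blast
    next
      case False
      have "\<forall>x\<in>A. \<forall>y\<in>A. \<not> adj H x y"
      proof (intro ballI notI)
        fix x y assume xy: "x \<in> A" "y \<in> A" "adj H x y"
        then have "g x = c \<or> g y = c" using h1 ad' gA by blast
        then show False using False xy by blast
      qed
      then show ?thesis unfolding StarP_def by blast
    qed
  qed
qed


lemma star_indep:
  assumes a: "1 \<le> a" and st: "StarP (HH a) A"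
  shows "\<exists>T. T \<subseteq> {..<2*a+4} \<and> T \<inter> A = {} \<and> card T = a+1 \<and> (\<forall>x\<in>T. \<forall>y\<in>T. \<not> Hd a x y)"
proof -
  have nd: "\<exists>z. 2*a \<le> z \<and> z < 2*a+4 \<and> z \<notin> A"
  proof (rule ccontr)
    assume "\<not> (\<exists>z. 2*a \<le> z \<and> z < 2*a+4 \<and> z \<notin> A)"
    then have all: "2*a \<in> A" "2*a+1 \<in> A" "2*a+2 \<in> A" "2*a+3 \<in> A" by auto
    have e1: "Hd a (2*a) (2*a+2)" and e2: "Hd a (2*a+1) (2*a+3)" by (auto simp: Hd_def)
    from st[unfolded StarP_def adj_HH] show False
    proof (elim disjE bexE conjE)
      assume "\<forall>x\<in>A. \<forall>y\<in>A. \<not> Hd a x y" then show False using e1 all by blast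
    next
      fix c assume "\<forall>x\<in>A. \<forall>y\<in>A. Hd a x y \<longrightarrow> x = c \<or> y = c"
      then have "(2*a = c \<or> 2*a+2 = c) \<and> (2*a+1 = c \<or> 2*a+3 = c)" using e1 e2 all by blast
      then show False by arith
    qed
  qed
  then obtain z where z: "2*a \<le> z" "z < 2*a+4" "z \<notin> A" by blast
  show ?thesis
  proof (cases "\<exists>x\<in>A. \<exists>y\<in>A. x < a \<and> a \<le> y \<and> y < 2*a")
    case True
    then obtain x y where xy: "x \<in> A" "y \<in> A" "x < a" "a \<le> y" "y < 2*a" by blast
    have hxy: "Hd a x y" using xy by (simp add: Hd_def)
    have "\<not> (\<forall>x\<in>A. \<forall>y\<in>A. \<not> Hd a x y)" using hxy xy by blast
    then obtain c where c: "c \<in> A" "\<forall>x\<in>A. \<forall>y\<in>A. Hd a x y \<longrightarrow> x = c \<or> y = c" "\<forall>y\<in>A. y \<noteq> c \<longrightarrow> Hd a c y"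
      using st unfolding StarP_def adj_HH by blast
    then have "x = c \<or> y = c" using xy hxy by blast
    then show ?thesis
    proof
      assume cx: "x = c"
      have Asub: "\<forall>t\<in>A. t \<noteq> c \<longrightarrow> a \<le> t \<and> t < 2*a" using c(3) cx xy(3) by (auto simp: Hd_def)
      let ?T = "({..<a} - {c}) \<union> {2*a, 2*a+1}"
      have c1: "card ({..<a} - {c}) = a - 1" using cx xy(3) by simp
      have card: "card ?T = a+1"
        by (subst card_Un_disjoint) (use a c1 in auto)
      show ?thesis
        apply (rule exI[of _ ?T]) using card Asub by (auto simp: Hd_def)
    next
      assume cy: "y = c"
      have Asub: "\<forall>t\<in>A. t \<noteq> c \<longrightarrow> t < a" using c(3) cy xy(4,5) by (auto simp: Hd_def)
      let ?T = "({a..<2*a} - {c}) \<union> {2*a, 2*a+1}"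
      have c1: "card ({a..<2*a} - {c}) = a - 1" using cy xy(4,5) by simp
      have card: "card ?T = a+1"
        by (subst card_Un_disjoint) (use a c1 in auto)
      show ?thesis
        apply (rule exI[of _ ?T]) using card Asub by (auto simp: Hd_def)
    qed
  next
    case False
    then have "(\<forall>t\<in>A. \<not> t < a) \<or> (\<forall>t\<in>A. \<not>(a \<le> t \<and> t < 2*a))" by blast
    then show ?thesis
    proof
      assume h: "\<forall>t\<in>A. \<not> t < a"
      let ?T = "{..<a} \<union> {z}"
      have card: "card ?T = a+1" using z by simp
      show ?thesis
        apply (rule exI[of _ ?T]) using card h z by (auto simp: Hd_def)
    next
      assume h: "\<forall>t\<in>A. \<not>(a \<le> t \<and> t < 2*a)"
      let ?T = "{a..<2*a} \<union> {z}"
      have card: "card ?T = a+1" using z by simp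
      show ?thesis
        apply (rule exI[of _ ?T]) using card h z by (auto simp: Hd_def)
    qed
  qed
qed

lemma SG_core:
  assumes a: "1 \<le> a" and gG: "graph G" and pl: "\<forall>v\<in>verts G. p v < a+1"
    and hi: "has_induced (SG m) (induced G {v\<in>verts G. p v = 0})"
    and cl: "\<forall>i. 0 < i \<and> i < a+1 \<longrightarrow> clique_in G {v\<in>verts G. p v = i}"
  shows "G \<in> Forb (HH a)"
proof -
  have "\<not> has_induced G (HH a)"
  proof
    assume "has_induced G (HH a)"
    then obtain g where g1: "inj_on g (verts (HH a))" and g2: "g ` verts (HH a) \<subseteq> verts G"
      and g3: "\<And>u v. u \<in> verts (HH a) \<Longrightarrow> v \<in> verts (HH a) \<Longrightarrow> adj (HH a) u v \<longleftrightarrow> adj G (g u) (g v)"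
      by (rule has_induced_emb) blast
    let ?A = "{v \<in> verts (HH a). p (g v) = 0}"
    have stP: "StarP G {v\<in>verts G. p v = 0}" by (rule StarP_from_SG[OF hi])
    have sub1: "?A \<subseteq> verts (HH a)" by (rule subsetI) simp
    have sub2: "g ` ?A \<subseteq> {v \<in> verts G. p v = 0}"
    proof
      fix x assume "x \<in> g ` ?A"
      then obtain v where v: "v \<in> verts (HH a)" "p (g v) = 0" "x = g v" by blast
      then have "g v \<in> verts G" using g2 by blast
      then show "x \<in> {v \<in> verts G. p v = 0}" using v by simp
    qed
    have stA: "StarP (HH a) ?A" by (rule StarP_pull[OF stP g1 g3 sub1 sub2])
    obtain T where T: "T \<subseteq> {..<2*a+4}" "T \<inter> ?A = {}" "card T = a+1" "\<forall>x\<in>T. \<forall>y\<in>T. \<not> Hd a x y"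
      using star_indep[OF a stA] by (elim exE conjE) blast
    show False
    proof (rule emb_pigeon[OF gG g1 g2 g3, of T p "{1..a}"])
      show "T \<subseteq> verts (HH a)" using T(1) by (simp add: verts_HH)
      show "\<And>x y. x \<in> T \<Longrightarrow> y \<in> T \<Longrightarrow> \<not> Hd a x y" using T(4) by blast
      show "\<And>v. v \<in> T \<Longrightarrow> p (g v) \<in> {1..a}"
      proof -
        fix v assume v: "v \<in> T"
        then have vV: "v \<in> verts (HH a)" using T(1) by (simp add: verts_HH subset_iff)
        then have "g v \<in> verts G" using g2 by blast
        then have "p (g v) < a+1" using pl by blast
        moreover have "p (g v) \<noteq> 0"
        proof
          assume "p (g v) = 0"
          then have "v \<in> ?A" using vV by simp
          then show False using T(2) v by blast
        qed
        ultimately show "p (g v) \<in> {1..a}" by simp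
      qed
      show "\<And>i. i \<in> {1..a} \<Longrightarrow> clique_in G {v\<in>verts G. p v = i}" using cl by auto
      show "finite {1..a}" by simp
      show "card {1..a} < card T" using T(3) by simp
    qed
  qed
  then show ?thesis unfolding Forb_def using gG by simp
qed

lemma SG_red: assumes a: "3 \<le> a" shows "SG m \<in> red (Forb (HH a))"
proof -
  have a1: "1 \<le> a" using a by simp
  have "\<forall>G. graph G \<longrightarrow>
          (\<forall>p :: nat \<Rightarrow> nat. (\<forall>v\<in>verts G. p v < a+1) \<and>
             has_induced (SG m) (induced G {v\<in>verts G. p v = 0}) \<and>
             (\<forall>i. 1 \<le> i \<and> i \<le> 0 \<longrightarrow> stable_in G {v\<in>verts G. p v = i}) \<and>
             (\<forall>i. 0 < i \<and> i < a+1 \<longrightarrow> clique_in G {v\<in>verts G. p v = i})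
           \<longrightarrow> G \<in> Forb (HH a))"
    apply (intro allI impI)
    apply (elim conjE)
    apply (rule SG_core[OF a1])
       apply assumption+
    done
  then have "reduced (Forb (HH a)) (SG m)"
    unfolding reduced_def Let_def chi_HH[OF a1] by (intro exI[of _ 0]) simp
  then show ?thesis unfolding red_def using graph_SG by simp
qed

theorem theorem2p6:
  shows "\<exists>S :: nat graph set. infinite S \<and>
    (\<forall>H\<in>S. graph H \<and> critical_graph 1 H \<and> \<not> critical_graph 0 H) \<and>
    (\<forall>H1\<in>S. \<forall>H2\<in>S. H1 \<noteq> H2 \<longrightarrow> \<not> iso H1 H2)"
proof -
  define S where "S = range (\<lambda>k. HH (k+3))"
  have cardV: "\<And>a. card (verts (HH a)) = 2*a+4" by (simp add: verts_HH)
  have inj: "inj (\<lambda>k. HH (k+3))"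
  proof (rule injI)
    fix i j assume "HH (i+3) = HH (j+3)"
    then have "card (verts (HH (i+3))) = card (verts (HH (j+3)))" by simp
    then show "i = j" by (simp add: cardV)
  qed
  have inf: "infinite S" unfolding S_def using finite_imageD[of "\<lambda>k. HH (k+3)" UNIV] inj by auto
  have props: "\<forall>H\<in>S. graph H \<and> critical_graph 1 H \<and> \<not> critical_graph 0 H"
  proof
    fix H assume "H \<in> S"
    then obtain k where H: "H = HH (k+3)" unfolding S_def by blast
    have c1: "critical_graph 1 H" unfolding critical_graph_def critical_family_def H
      using red_1star[of "k+3"] by (intro exI[of _ 0]) auto
    have c0: "\<not> critical_graph 0 H"
    proof
      assume "critical_graph 0 H"
      then obtain n0 where n0: "\<forall>K\<in>red (Forb (HH (k+3))). n0 \<le> card (verts K) \<longrightarrow> s_star 0 K"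
        unfolding critical_graph_def critical_family_def H by blast
      have "SG (n0+2) \<in> red (Forb (HH (k+3)))" by (rule SG_red) simp
      moreover have "n0 \<le> card (verts (SG (n0+2)))" by (simp add: verts_SG)
      ultimately have "s_star 0 (SG (n0+2))" using n0 by blast
      then show False using SG_not0[of "n0+2"] by simp
    qed
    show "graph H \<and> critical_graph 1 H \<and> \<not> critical_graph 0 H" using graph_HH c1 c0 H by simp
  qed
  have noniso: "\<forall>H1\<in>S. \<forall>H2\<in>S. H1 \<noteq> H2 \<longrightarrow> \<not> iso H1 H2"
  proof (intro ballI impI notI)
    fix H1 H2 assume h: "H1 \<in> S" "H2 \<in> S" "H1 \<noteq> H2" "iso H1 H2"
    then obtain i j where ij: "H1 = HH (i+3)" "H2 = HH (j+3)" unfolding S_def by blast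
    from h(4) obtain f where "bij_betw f (verts H1) (verts H2)" unfolding iso_def by blast
    then have "card (verts H1) = card (verts H2)" by (rule bij_betw_same_card)
    then have "i = j" using ij cardV by simp
    then show False using h(3) ij by simp
  qed
  show ?thesis using inf props noniso by blast
qed
end
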